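(* Let $f:\mathbb{R}^n\to\mathbb{R}\cup\{+\infty\}$ be a closed proper convex function and $x^*\in\arg\min_x f(x)$. Let $(A_k),(a_k),(b_k),(c_k)$, $k\geqslant0$, be real sequences with $a_k>0$, $c_k>0$ for all $k$, $b_k>0$ for $k\geqslant1$, satisfying $$A_k=a_kb_k,\quad A_{k+1}-A_k\leqslant a_k,\quad a_k\leqslant c_k,\quad A_0=b_0=0.$$ Let $x_0\in\mathbb{R}^n$, $z_0=x_0$, and for $k\geqslant0$ $$y_{k+1}=\frac{1}{b_k+1}z_k+\frac{b_k}{b_k+1}x_k,\qquad x_{k+1}=\mathrm{prox}_{\frac{c_k}{b_k+1}f}(y_{k+1}),\qquad z_{k+1}=z_k+\frac{a_k}{c_k}(b_k+1)(x_{k+1}-y_{k+1}).$$ Then for every $k\geqslant1$, $$f(x_k)-f(x^* )\leqslant\frac{\|x_0-x^*\|^2}{2A_k},$$ and for every $k\geqslant0$, $$\min_{0\leqslant j\leqslant k}\Big\|\frac{(b_j+1)x_{j+1}-b_jx_j-z_j}{c_j}\Big\|^2\leqslant\frac{\|x_0-x^*\|^2}{\sum_{j=0}^ka_j^2}.$$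
   Context: For $\gamma>0$, $\mathrm{prox}_{\gamma f}(y)=\arg\min_x\{f(x)+\frac{1}{2\gamma}\|x-y\|^2\}$. $\|\cdot\|$ is the Euclidean norm. *)

theory Defs
  imports "HOL-Analysis.Analysis"
begin

definition proper_fun :: "('a \<Rightarrow> ereal) \<Rightarrow> bool" where
  "proper_fun f \<longleftrightarrow> (\<forall>x. f x \<noteq> -\<infinity>) \<and> (\<exists>x. f x \<noteq> \<infinity>)"

definition convex_fun :: "('a::real_vector \<Rightarrow> ereal) \<Rightarrow> bool" where
  "convex_fun f \<longleftrightarrow> (\<forall>x y t. 0 < t \<and> t < 1 \<longrightarrow>
      f ((1 - t) *\<^sub>R x + t *\<^sub>R y) \<le> ereal (1 - t) * f x + ereal t * f y)"

definition closed_fun :: "('a::topological_space \<Rightarrow> ereal) \<Rightarrow> bool" where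
  "closed_fun f \<longleftrightarrow> closed {(x, r::real). f x \<le> ereal r}"

definition prox :: "real \<Rightarrow> ('a::real_normed_vector \<Rightarrow> ereal) \<Rightarrow> 'a \<Rightarrow> 'a" where
  "prox \<gamma> f y = (SOME x. \<forall>u. f x + ereal ((norm (x - y))\<^sup>2 / (2 * \<gamma>))
                           \<le> f u + ereal ((norm (u - y))\<^sup>2 / (2 * \<gamma>)))"

end

theory Submission
  imports Defs
begin
lemma prox_min:
  fixes f :: "'a::euclidean_space \<Rightarrow> ereal"
  assumes cl: "closed_fun f" and mn: "\<forall>u. f m \<le> f u" and fm: "f m = ereal fm" and g: "\<gamma> > 0"
  shows "\<exists>p. \<forall>u. f p + ereal ((norm (p - y))\<^sup>2 / (2 * \<gamma>)) \<le> f u + ereal ((norm (u - y))\<^sup>2 / (2 * \<gamma>))"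
proof -
  define q where "q u = (norm (u - y))\<^sup>2 / (2 * \<gamma>)" for u
  have q0: "q u \<ge> 0" for u using g unfolding q_def by simp
  define H where "H = fm + q m"
  define K where "K = {(u, r::real). f u \<le> ereal r} \<inter> ({p. q (fst p) \<le> H - fm} \<inter> {p. fm \<le> snd p} \<inter> {p. snd p \<le> H})"
    have c1: "closed {p. q (fst p) \<le> H - fm}"
    apply (rule closed_Collect_le)
    unfolding q_def using g by (intro continuous_intros; auto)+
  have c2: "closed {p::'a \<times> real. fm \<le> snd p}"
    by (rule closed_Collect_le) (intro continuous_intros)+
  have c3: "closed {p::'a \<times> real. snd p \<le> H}"
    by (rule closed_Collect_le) (intro continuous_intros)+
  have "closed K" unfolding K_def
    using cl c1 c2 c3 closed_fun_def by (intro closed_Int) auto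
  moreover have "bounded K"
  proof -
    define R where "R = sqrt (2 * \<gamma> * (H - fm))"
    have "K \<subseteq> cball y R \<times> {fm..H}"
    proof
      fix p assume "p \<in> K"
      then obtain u r where p: "p = (u, r)" and "q u \<le> H - fm" "fm \<le> r" "r \<le> H"
        unfolding K_def by auto
      then have "(norm (u - y))\<^sup>2 \<le> 2 * \<gamma> * (H - fm)" using g unfolding q_def
        by (simp add: field_simps)
      then have "norm (u - y) \<le> R" unfolding R_def using real_le_rsqrt by blast
      then have "dist y u \<le> R" by (simp add: dist_norm norm_minus_commute)
      then show "p \<in> cball y R \<times> {fm..H}" using p \<open>fm \<le> r\<close> \<open>r \<le> H\<close> by auto
    qed
    then show ?thesis by (rule bounded_subset[OF bounded_Times[OF bounded_cball bounded_closed_interval]])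
  qed
  ultimately have "compact K" using compact_eq_bounded_closed by blast
  moreover have mK: "(m, fm) \<in> K" unfolding K_def H_def using fm q0 by auto
  moreover have "continuous_on K (\<lambda>p. snd p + q (fst p))"
    unfolding q_def using g by (intro continuous_intros; auto)
  ultimately obtain p0 where p0K: "p0 \<in> K" and p0m: "\<forall>p\<in>K. snd p0 + q (fst p0) \<le> snd p + q (fst p)"
    using continuous_attains_inf[of K "\<lambda>p. snd p + q (fst p)"] by blast
  obtain u0 r0 where p0: "p0 = (u0, r0)" by (cases p0)
  have fu0: "f u0 \<le> ereal r0" using p0K p0 unfolding K_def by auto
  have le0: "r0 + q u0 \<le> H" using p0m mK p0 H_def by fastforce
  have A: "f u0 + ereal (q u0) \<le> ereal (r0 + q u0)" using add_right_mono[OF fu0, of "ereal (q u0)"] by simp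
  have "\<forall>u. f u0 + ereal (q u0) \<le> f u + ereal (q u)"
  proof
    fix u
    show "f u0 + ereal (q u0) \<le> f u + ereal (q u)"
    proof (cases "ereal H \<le> f u + ereal (q u)")
      case True
      have "ereal (r0 + q u0) \<le> ereal H" using le0 by simp
      then show ?thesis using A True by (meson order_trans)
    next
      case False
      then have lt: "f u + ereal (q u) < ereal H" by simp
      have "f u \<ge> ereal fm" using mn fm by metis
      then obtain r where r: "f u = ereal r"
        using lt by (cases "f u") auto
      have "r + q u < H" using lt r by simp
      moreover have "fm \<le> r" using \<open>f u \<ge> ereal fm\<close> r by simp
      ultimately have "(u, r) \<in> K" unfolding K_def using r q0[of u] by simp
      then have "r0 + q u0 \<le> r + q u" using p0m p0 by fastforce
      then have "ereal (r0 + q u0) \<le> f u + ereal (q u)" using r by simp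
      then show ?thesis using A by (meson order_trans)
    qed
  qed
  then show ?thesis unfolding q_def by blast
qed

lemma small_le:
  fixes D C :: real
  assumes C: "C \<ge> 0" and h: "\<And>t. 0 < t \<Longrightarrow> t < 1 \<Longrightarrow> D \<le> t * C"
  shows "D \<le> 0"
proof (rule ccontr)
  assume "\<not> D \<le> 0"
  then have D: "D > 0" by simp
  define t where "t = D / (2 * C + 2 * D)"
  have t0: "0 < t" using C D unfolding t_def by simp
  have e1: "C * D \<ge> 0" using C D by simp
  have e2: "D * (D * 2) > 0" using D by simp
  have t1: "t < 1" using C D e1 e2 unfolding t_def by (simp add: field_simps)
  have "C < 2 * C + 2 * D" using C D by linarith
  then have "C / (2 * C + 2 * D) < 1" using C D by simp
  then have "D * (C / (2 * C + 2 * D)) < D * 1" using D by (intro mult_strict_left_mono) auto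
  then have "t * C < D" unfolding t_def by simp
  then show False using h[OF t0 t1] by simp
qed

lemma norm_add_scale:
  fixes a b :: "'a::real_inner"
  shows "(norm (a + t *\<^sub>R b))\<^sup>2 = (norm a)\<^sup>2 + 2 * t * inner a b + t\<^sup>2 * (norm b)\<^sup>2"
  unfolding power2_norm_eq_inner by (simp add: inner_add_left inner_add_right inner_commute algebra_simps power2_eq_square)

lemma prox_sub:
  fixes f :: "'a::real_inner \<Rightarrow> ereal"
  assumes cv: "convex_fun f" and g: "\<gamma> > 0"
    and mn: "\<forall>u. f p + ereal ((norm (p - y))\<^sup>2 / (2 * \<gamma>)) \<le> f u + ereal ((norm (u - y))\<^sup>2 / (2 * \<gamma>))"
    and fp: "f p = ereal fp" and fu: "f u = ereal fu"
  shows "fp + inner ((1 / \<gamma>) *\<^sub>R (y - p)) (u - p) \<le> fu"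
proof -
  define D where "D = fp + inner ((1 / \<gamma>) *\<^sub>R (y - p)) (u - p) - fu"
  define C where "C = (norm (u - p))\<^sup>2 / (2 * \<gamma>)"
  have "D \<le> 0"
  proof (rule small_le)
    show "C \<ge> 0" unfolding C_def using g by simp
    fix t :: real assume t0: "0 < t" and t1: "t < 1"
    define ut where "ut = (1 - t) *\<^sub>R p + t *\<^sub>R u"
    have "f ut \<le> ereal (1 - t) * f p + ereal t * f u"
      using cv t0 t1 unfolding convex_fun_def ut_def by blast
    then have c1: "f ut \<le> ereal ((1 - t) * fp + t * fu)" using fp fu by simp
    have c2: "f p + ereal ((norm (p - y))\<^sup>2 / (2 * \<gamma>)) \<le> f ut + ereal ((norm (ut - y))\<^sup>2 / (2 * \<gamma>))"
      using mn by blast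
    have c3: "ereal (fp + (norm (p - y))\<^sup>2 / (2 * \<gamma>)) \<le> ereal ((1 - t) * fp + t * fu + (norm (ut - y))\<^sup>2 / (2 * \<gamma>))"
    proof -
      have "f ut + ereal ((norm (ut - y))\<^sup>2 / (2 * \<gamma>)) \<le> ereal ((1 - t) * fp + t * fu) + ereal ((norm (ut - y))\<^sup>2 / (2 * \<gamma>))"
        using add_right_mono[OF c1] by blast
      from order_trans[OF c2 this] show ?thesis using fp by simp
    qed
    then have c4: "fp + (norm (p - y))\<^sup>2 / (2 * \<gamma>) \<le> (1 - t) * fp + t * fu + (norm (ut - y))\<^sup>2 / (2 * \<gamma>)"
      by simp
    have "ut - y = (p - y) + t *\<^sub>R (u - p)" unfolding ut_def by (simp add: algebra_simps)
    then have n: "(norm (ut - y))\<^sup>2 = (norm ((p - y) + t *\<^sub>R (u - p)))\<^sup>2" by (rule arg_cong[where f="\<lambda>v. (norm v)\<^sup>2"])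
    also have "\<dots> = (norm (p - y))\<^sup>2 + 2 * t * inner (p - y) (u - p) + t\<^sup>2 * (norm (u - p))\<^sup>2"
      by (rule norm_add_scale)
    finally have n: "(norm (ut - y))\<^sup>2 = (norm (p - y))\<^sup>2 + 2 * t * inner (p - y) (u - p) + t\<^sup>2 * (norm (u - p))\<^sup>2"
.
    have i: "inner ((1 / \<gamma>) *\<^sub>R (y - p)) (u - p) = - inner (p - y) (u - p) / \<gamma>"
      by (simp add: inner_diff_left)
    have "t * (fp - fu) \<le> (2 * t * inner (p - y) (u - p) + t\<^sup>2 * (norm (u - p))\<^sup>2) / (2 * \<gamma>)"
    proof -
      have "((norm (p - y))\<^sup>2 + 2 * t * inner (p - y) (u - p) + t\<^sup>2 * (norm (u - p))\<^sup>2) / (2 * \<gamma>)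
         = (norm (p - y))\<^sup>2 / (2 * \<gamma>) + (2 * t * inner (p - y) (u - p) + t\<^sup>2 * (norm (u - p))\<^sup>2) / (2 * \<gamma>)"
        using g by (simp add: field_simps)
      then show ?thesis using c4 unfolding n by (simp add: algebra_simps)
    qed
    then have "t * (fp - fu) \<le> t * (inner (p - y) (u - p) / \<gamma> + t * ((norm (u - p))\<^sup>2 / (2 * \<gamma>)))"
      using g by (simp add: field_simps power2_eq_square)
    then have "fp - fu \<le> inner (p - y) (u - p) / \<gamma> + t * C"
      using t0 unfolding C_def by simp
    then show "D \<le> t * C" unfolding D_def i by simp
  qed
  then show ?thesis unfolding D_def by simp
qed

theorem theorem6:
  fixes f :: "real ^ 'n \<Rightarrow> ereal"
    and xs x0 :: "real ^ 'n"
    and A a b c :: "nat \<Rightarrow> real"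
    and x y z :: "nat \<Rightarrow> real ^ 'n"
  assumes "closed_fun f" and "proper_fun f" and "convex_fun f"
    and "\<forall>u. f xs \<le> f u"
    and "\<forall>k. a k > 0" and "\<forall>k. c k > 0" and "\<forall>k\<ge>1. b k > 0"
    and "\<forall>k. A k = a k * b k"
    and "\<forall>k. A (Suc k) - A k \<le> a k"
    and "\<forall>k. a k \<le> c k"
    and "A 0 = 0" and "b 0 = 0"
    and "x 0 = x0" and "z 0 = x0"
    and "\<forall>k. y (Suc k) = (1 / (b k + 1)) *\<^sub>R z k + (b k / (b k + 1)) *\<^sub>R x k"
    and "\<forall>k. x (Suc k) = prox (c k / (b k + 1)) f (y (Suc k))"
    and "\<forall>k. z (Suc k) = z k + ((a k / c k) * (b k + 1)) *\<^sub>R (x (Suc k) - y (Suc k))"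
  shows "(\<forall>k\<ge>1. f (x k) - f xs \<le> ereal ((norm (x0 - xs))\<^sup>2 / (2 * A k)))
       \<and> (\<forall>k. Min ((\<lambda>j. (norm ((1 / c j) *\<^sub>R ((b j + 1) *\<^sub>R x (Suc j) - b j *\<^sub>R x j - z j)))\<^sup>2) ` {..k})
               \<le> (norm (x0 - xs))\<^sup>2 / (\<Sum>j\<le>k. (a j)\<^sup>2))"
proof -
  note cl = assms(1) and pr = assms(2) and cv = assms(3) and mn = assms(4)
    and apos = assms(5) and cpos = assms(6) and bpos1 = assms(7) and Adef = assms(8)
    and Ainc = assms(9) and ac = assms(10) and A0 = assms(11) and b0 = assms(12)
    and x0 = assms(13) and z0 = assms(14) and yd = assms(15) and xd = assms(16) and zd = assms(17)
  obtain w where "f w \<noteq> \<infinity>" using pr unfolding proper_fun_def by blast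
  then have "f xs \<noteq> \<infinity>" using mn by (metis ereal_infty_less_eq(1))
  moreover have "f xs \<noteq> -\<infinity>" using pr unfolding proper_fun_def by blast
  ultimately obtain fs where fs: "f xs = ereal fs" by (cases "f xs") auto
  have bnn: "b k \<ge> 0" for k
    using b0 bpos1 by (cases k) (auto simp: less_imp_le)
  define gam where "gam k = c k / (b k + 1)" for k
  have gpos: "gam k > 0" for k unfolding gam_def using cpos[rule_format, of k] bnn[of k] by simp
  have minp: "\<forall>u. f (x (Suc k)) + ereal ((norm (x (Suc k) - y (Suc k)))\<^sup>2 / (2 * gam k))
       \<le> f u + ereal ((norm (u - y (Suc k)))\<^sup>2 / (2 * gam k))" for k
  proof -
    have "x (Suc k) = prox (gam k) f (y (Suc k))" using xd gam_def by simp
    then show ?thesis unfolding prox_def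
      using someI_ex[OF prox_min[OF cl mn fs gpos[of k], of "y (Suc k)"]] by simp
  qed
  define F where "F k = real_of_ereal (f (x k))" for k
  have ffin: "f (x (Suc k)) = ereal (F (Suc k))" for k
  proof -
    have h: "f (x (Suc k)) + ereal ((norm (x (Suc k) - y (Suc k)))\<^sup>2 / (2 * gam k))
       \<le> ereal (fs + (norm (xs - y (Suc k)))\<^sup>2 / (2 * gam k))" using minp[of k, rule_format, of xs] fs by simp
    have "f (x (Suc k)) \<noteq> \<infinity>"
    proof
      assume "f (x (Suc k)) = \<infinity>" then show False using h by simp
    qed
    moreover have "f (x (Suc k)) \<noteq> -\<infinity>" using mn fs by (metis MInfty_neq_ereal(1) ereal_infty_less_eq(2))
    ultimately show ?thesis unfolding F_def by (cases "f (x (Suc k))") auto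
  qed
  have Fge: "fs \<le> F (Suc k)" for k using mn fs ffin by (metis ereal_less_eq(3))
  define g where "g k = (1 / gam k) *\<^sub>R (y (Suc k) - x (Suc k))" for k
  have sub: "F (Suc k) + inner (g k) (u - x (Suc k)) \<le> fu" if "f u = ereal fu" for k u fu
    using prox_sub[OF cv gpos[of k] minp[of k] ffin[of k] that] unfolding g_def by simp
  have byf: "(b k + 1) *\<^sub>R y (Suc k) = z k + b k *\<^sub>R x k" for k
  proof -
    have ne: "b k + 1 \<noteq> 0" using bnn[of k] by simp
    have "(b k + 1) *\<^sub>R y (Suc k) = ((b k + 1) * (1 / (b k + 1))) *\<^sub>R z k + ((b k + 1) * (b k / (b k + 1))) *\<^sub>R x k"
      using yd by (simp add: scaleR_add_right)
    also have "\<dots> = z k + b k *\<^sub>R x k" using ne by simp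
    finally show ?thesis .
  qed
  have cg: "c k *\<^sub>R g k = (b k + 1) *\<^sub>R (y (Suc k) - x (Suc k))" for k
  proof -
    have "c k * (1 / gam k) = b k + 1" unfolding gam_def using cpos[rule_format, of k] bnn[of k] by simp
    then show ?thesis unfolding g_def by simp
  qed
  define E where "E k = A k * (F k - fs) + (norm (z k - xs))\<^sup>2 / 2" for k
  have step: "E (Suc k) + (a k)\<^sup>2 * (norm (g k))\<^sup>2 / 2 \<le> E k" for k
  proof -
    define N where "N = (norm (g k))\<^sup>2"
    define I1 where "I1 = inner (g k) (x (Suc k) - x k)"
    define I2 where "I2 = inner (g k) (x (Suc k) - xs)"
    define Z where "Z = (norm (z k - xs))\<^sup>2"
    have zk: "z k - xs = c k *\<^sub>R g k + b k *\<^sub>R (x (Suc k) - x k) + (x (Suc k) - xs)"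
    proof -
      have "c k *\<^sub>R g k = (b k + 1) *\<^sub>R y (Suc k) - (b k + 1) *\<^sub>R x (Suc k)"
        using cg[of k] by (simp add: scaleR_diff_right)
      then have "c k *\<^sub>R g k = z k + b k *\<^sub>R x k - (b k + 1) *\<^sub>R x (Suc k)"
        using byf[of k] by simp
      then show ?thesis by (simp add: algebra_simps)
    qed
    have zs: "z (Suc k) - xs = (z k - xs) + (- a k) *\<^sub>R g k"
    proof -
      have "a k *\<^sub>R g k = (a k / c k) *\<^sub>R (c k *\<^sub>R g k)" using cpos[rule_format, of k] by simp
      also have "\<dots> = ((a k / c k) * (b k + 1)) *\<^sub>R (y (Suc k) - x (Suc k))" using cg[of k] by simp
      finally have "a k *\<^sub>R g k = - (((a k / c k) * (b k + 1)) *\<^sub>R (x (Suc k) - y (Suc k)))"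
        by (simp add: scaleR_diff_right)
      then show ?thesis using zd by simp
    qed
    have inz: "inner (z k - xs) (g k) = c k * N + b k * I1 + I2"
      apply (subst inner_commute)
      apply (simp only: zk inner_add_right inner_scaleR_right N_def I1_def I2_def power2_norm_eq_inner)
      done
    have nz: "(norm (z (Suc k) - xs))\<^sup>2 = Z - 2 * (a k * c k * N) - 2 * (A k * I1) - 2 * (a k * I2) + (a k)\<^sup>2 * N"
      unfolding zs norm_add_scale inz Z_def N_def using Adef by (simp add: algebra_simps)
    have h1: "a k * F (Suc k) - a k * I2 \<le> a k * fs"
    proof -
      have "F (Suc k) + inner (g k) (xs - x (Suc k)) \<le> fs" by (rule sub[OF fs])
      moreover have "inner (g k) (xs - x (Suc k)) = - I2" unfolding I2_def by (simp add: inner_diff_right)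
      ultimately have "F (Suc k) - I2 \<le> fs" by simp
      then have "a k * (F (Suc k) - I2) \<le> a k * fs" using apos[rule_format, of k] by simp
      then show ?thesis by (simp add: algebra_simps)
    qed
    have h2: "A k * F (Suc k) - A k * I1 \<le> A k * F k"
    proof (cases k)
      case 0
      then show ?thesis using A0 by simp
    next
      case (Suc j)
      have "F (Suc k) + inner (g k) (x k - x (Suc k)) \<le> F k"
        using sub[where k=k and u="x k" and fu="F k"] ffin[of j] Suc by simp
      moreover have "inner (g k) (x k - x (Suc k)) = - I1" unfolding I1_def by (simp add: inner_diff_right)
      ultimately have "F (Suc k) - I1 \<le> F k" by simp
      moreover have "A k \<ge> 0" using Adef apos[rule_format, of k] bnn[of k] by simp
      ultimately have "A k * (F (Suc k) - I1) \<le> A k * F k" by (simp add: mult_left_mono)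
      then show ?thesis by (simp add: algebra_simps)
    qed
    have h3: "A (Suc k) * (F (Suc k) - fs) \<le> (A k + a k) * (F (Suc k) - fs)"
      using Ainc[rule_format, of k] Fge[of k] by (intro mult_right_mono) auto
    have h4: "(a k)\<^sup>2 * N \<le> a k * c k * N"
    proof -
      have "(a k)\<^sup>2 \<le> a k * c k" using ac[rule_format, of k] apos[rule_format, of k]
        by (simp add: power2_eq_square)
      then show ?thesis unfolding N_def by (intro mult_right_mono) auto
    qed
    have h3': "A (Suc k) * F (Suc k) - A (Suc k) * fs \<le> A k * F (Suc k) - A k * fs + a k * F (Suc k) - a k * fs"
      using h3 by (simp add: algebra_simps)
    have e1: "E (Suc k) = A (Suc k) * F (Suc k) - A (Suc k) * fs + (norm (z (Suc k) - xs))\<^sup>2 / 2"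
      unfolding E_def by (simp add: algebra_simps)
    have e2: "E k = A k * F k - A k * fs + Z / 2" unfolding E_def Z_def by (simp add: algebra_simps)
    show ?thesis unfolding N_def[symmetric] using e1 e2 nz h1 h2 h3' h4 by linarith
  qed
  have tele: "E k + (\<Sum>j<k. (a j)\<^sup>2 * (norm (g j))\<^sup>2) / 2 \<le> (norm (x0 - xs))\<^sup>2 / 2" for k
  proof (induction k)
    case 0
    then show ?case unfolding E_def using A0 z0 by simp
  next
    case (Suc k)
    have "(\<Sum>j<Suc k. (a j)\<^sup>2 * (norm (g j))\<^sup>2) / 2 = (\<Sum>j<k. (a j)\<^sup>2 * (norm (g j))\<^sup>2) / 2 + (a k)\<^sup>2 * (norm (g k))\<^sup>2 / 2"
      by (simp add: add_divide_distrib)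
    then show ?case using Suc.IH step[of k] by linarith
  qed
  have Apos: "A k > 0" if "k \<ge> 1" for k using Adef apos bpos1 that by simp
  have Enn: "E (Suc k) \<ge> (norm (z (Suc k) - xs))\<^sup>2 / 2" for k
    unfolding E_def using Apos[of "Suc k"] Fge[of k] by simp
  show ?thesis
  proof (intro conjI allI impI)
    fix k :: nat assume k1: "1 \<le> k"
    then obtain j where kj: "k = Suc j" by (cases k) auto
    have "A k * (F k - fs) \<le> (norm (x0 - xs))\<^sup>2 / 2"
      using tele[of k] unfolding E_def
      by (smt (verit) sum_nonneg zero_le_power2 mult_nonneg_nonneg divide_nonneg_pos)
    then have "F k - fs \<le> (norm (x0 - xs))\<^sup>2 / (2 * A k)"
      using Apos[OF k1] by (simp add: field_simps)
    then show "f (x k) - f xs \<le> ereal ((norm (x0 - xs))\<^sup>2 / (2 * A k))"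
      using ffin[of j] fs kj by simp
  next
    fix k
    define T where "T j = (norm ((1 / c j) *\<^sub>R ((b j + 1) *\<^sub>R x (Suc j) - b j *\<^sub>R x j - z j)))\<^sup>2" for j
    have Tg: "T j = (norm (g j))\<^sup>2" for j
    proof -
      have "(b j + 1) *\<^sub>R x (Suc j) - b j *\<^sub>R x j - z j = - (c j *\<^sub>R g j)"
        using cg[of j] byf[of j] by (simp add: algebra_simps)
      then have "(1 / c j) *\<^sub>R ((b j + 1) *\<^sub>R x (Suc j) - b j *\<^sub>R x j - z j) = - g j"
        using cpos[rule_format, of j] by simp
      then show ?thesis unfolding T_def by simp
    qed
    define m where "m = Min (T ` {..k})"
    have mle: "m \<le> (norm (g j))\<^sup>2" if "j \<le> k" for j
    proof -
      have "m \<le> T j" unfolding m_def using that by (intro Min_le) auto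
      then show ?thesis using Tg[of j] by simp
    qed
    define S where "S = (\<Sum>j\<le>k. (a j)\<^sup>2)"
    have Spos: "S > 0" unfolding S_def using apos
      by (intro sum_pos) (auto simp: less_imp_neq[symmetric])
    have "m * S = (\<Sum>j\<le>k. (a j)\<^sup>2 * m)" unfolding S_def by (simp add: sum_distrib_left mult.commute)
    also have "\<dots> \<le> (\<Sum>j\<le>k. (a j)\<^sup>2 * (norm (g j))\<^sup>2)"
      by (intro sum_mono mult_left_mono mle) auto
    also have "\<dots> = (\<Sum>j<Suc k. (a j)\<^sup>2 * (norm (g j))\<^sup>2)" using lessThan_Suc_atMost by simp
    also have "\<dots> \<le> (norm (x0 - xs))\<^sup>2"
    proof -
      have "E (Suc k) \<ge> 0" using Enn[of k] zero_le_power2[of "norm (z (Suc k) - xs)"] by linarith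
      then show ?thesis using tele[of "Suc k"] by linarith
    qed
    finally have "m * S \<le> (norm (x0 - xs))\<^sup>2" .
    then have "m \<le> (norm (x0 - xs))\<^sup>2 / S" using Spos by (simp add: pos_le_divide_eq)
    then show "Min ((\<lambda>j. (norm ((1 / c j) *\<^sub>R ((b j + 1) *\<^sub>R x (Suc j) - b j *\<^sub>R x j - z j)))\<^sup>2) ` {..k})
               \<le> (norm (x0 - xs))\<^sup>2 / (\<Sum>j\<le>k. (a j)\<^sup>2)"
      unfolding m_def S_def T_def .
  qed
qed

end
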